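(* Let $n\neq 0,-1$ be an integer and $M$ the graph manifold obtained by $4$-surgery along the $n$-twist knot $K_n$, decomposed along an incompressible torus as $M=E_{T(2,2n+1)}\cup N(Kb)$. Then for every irreducible representation $\bar\rho:\pi_1(M)\to SL(2,\mathbb{C})$, the restriction of $\bar\rho$ to $\pi_1(E_{T(2,2n+1)})$ is abelian.
   Context: The $n$-twist knot $K_n$ is the two-bridge knot whose group has the presentation $\pi_1(E_{K_n})=\langle \alpha,\beta\mid \omega^n\alpha=\beta\omega^n\rangle$ with $\alpha,\beta$ meridians and $\omega=\beta\alpha^{-1}\beta^{-1}\alpha$; its Alexander polynomial is $-nt^2+(2n+1)t-n$, and $K_1$ is the figure-eight knot. $E_K$ denotes a knot exterior, $T(2,2n+1)$ the torus knot of type $(2,2n+1)$, and $N(Kb)$ the twisted $I$-bundle over the Klein bottle. The manifold $M$ obtained by $4$-surgery along $K_n$ is the union of $E_{T(2,2n+1)}$ and $N(Kb)$ along a torus, with $\pi_1(M)=\langle a,b,x,y\mid a^2=b^{2n+1},\ x^{-1}yx=y^{-1},\ \mu=y^{-1},\ h=y^{-1}x^2\rangle$, where $\pi_1(E_{T(2,2n+1)})=\langle a,b\mid a^2=b^{2n+1}\rangle$, $\pi_1(N(Kb))=\langle x,y\mid x^{-1}yx=y^{-1}\rangle$, $\mu=b^{-n}a$ is a meridian and $h$ a regular fiber of the torus knot exterior. A representation is irreducible if the only subspaces of $\mathbb{C}^2$ invariant under its image are $\{0\}$ and $\mathbb{C}^2$; abelian if its image is abelian. *)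

theory Defs
  imports "HOL-Analysis.Analysis"
begin

type_synonym cmat2 = "complex^2^2"

fun mpow :: "cmat2 \<Rightarrow> nat \<Rightarrow> cmat2" where
  "mpow A 0 = mat 1"
| "mpow A (Suc k) = A ** mpow A k"

definition mzpow :: "cmat2 \<Rightarrow> int \<Rightarrow> cmat2" where
  "mzpow A k = (if 0 \<le> k then mpow A (nat k) else mpow (matrix_inv A) (nat (- k)))"

definition SL2 :: "cmat2 set" where
  "SL2 = {A. det A = 1}"

inductive_set gen_grp :: "cmat2 set \<Rightarrow> cmat2 set" for S where
  one: "mat 1 \<in> gen_grp S"
| gen: "g \<in> S \<Longrightarrow> g \<in> gen_grp S"
| inv: "g \<in> S \<Longrightarrow> matrix_inv g \<in> gen_grp S"
| mult: "g \<in> gen_grp S \<Longrightarrow> h \<in> gen_grp S \<Longrightarrow> g ** h \<in> gen_grp S"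

definition csubspace2 :: "(complex^2) set \<Rightarrow> bool" where
  "csubspace2 W \<longleftrightarrow> 0 \<in> W \<and> (\<forall>v\<in>W. \<forall>w\<in>W. v + w \<in> W) \<and> (\<forall>c. \<forall>v\<in>W. c *s v \<in> W)"

definition irreducible_set :: "cmat2 set \<Rightarrow> bool" where
  "irreducible_set G \<longleftrightarrow> (\<forall>W. csubspace2 W \<and> (\<forall>g\<in>G. \<forall>v\<in>W. g *v v \<in> W)
                           \<longrightarrow> W = {0} \<or> W = UNIV)"

definition abelian_set :: "cmat2 set \<Rightarrow> bool" where
  "abelian_set G \<longleftrightarrow> (\<forall>g\<in>G. \<forall>h\<in>G. g ** h = h ** g)"

text \<open>Representations of pi_1(M) = <a,b,x,y | a^2=b^(2n+1), x^-1 y x = y^-1, mu = y^-1, h = y^-1 x^2>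
  with mu = b^-n a and h = a^2 (the regular fiber), given by the images (A,B,X,Y) of the generators.\<close>
definition rep_M :: "int \<Rightarrow> cmat2 \<Rightarrow> cmat2 \<Rightarrow> cmat2 \<Rightarrow> cmat2 \<Rightarrow> bool" where
  "rep_M n A B X Y \<longleftrightarrow> A \<in> SL2 \<and> B \<in> SL2 \<and> X \<in> SL2 \<and> Y \<in> SL2
     \<and> mzpow A 2 = mzpow B (2*n+1)
     \<and> matrix_inv X ** Y ** X = matrix_inv Y
     \<and> mzpow B (-n) ** A = matrix_inv Y
     \<and> mzpow A 2 = matrix_inv Y ** mzpow X 2"

end

theory Submission
  imports Defs
begin

lemma inv_lr:
  fixes M :: cmat2 assumes "det M \<noteq> 0"
  shows "M ** matrix_inv M = mat 1" "matrix_inv M ** M = mat 1"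
proof -
  have "invertible M" using assms invertible_det_nz by blast
  then have "\<exists>A'. M ** A' = mat 1 \<and> A' ** M = mat 1" unfolding invertible_def by blast
  then have "M ** matrix_inv M = mat 1 \<and> matrix_inv M ** M = mat 1"
    unfolding matrix_inv_def by (rule someI_ex)
  then show "M ** matrix_inv M = mat 1" "matrix_inv M ** M = mat 1" by auto
qed

lemma mpow_comm:
  fixes M B :: cmat2 assumes "M ** B = B ** M"
  shows "mpow M k ** B = B ** mpow M k"
  by (induction k) (simp_all add: matrix_mul_assoc[symmetric] assms, simp add: matrix_mul_assoc assms)

lemma inv_comm:
  fixes M B :: cmat2 assumes "det M \<noteq> 0" "M ** B = B ** M"
  shows "matrix_inv M ** B = B ** matrix_inv M"
proof -
  have "matrix_inv M ** B = matrix_inv M ** B ** (M ** matrix_inv M)"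
    using inv_lr[OF assms(1)] by simp
  also have "\<dots> = matrix_inv M ** (B ** M) ** matrix_inv M" by (simp add: matrix_mul_assoc)
  also have "\<dots> = matrix_inv M ** (M ** B) ** matrix_inv M" by (simp add: assms(2))
  also have "\<dots> = (matrix_inv M ** M) ** B ** matrix_inv M" by (simp add: matrix_mul_assoc)
  also have "\<dots> = B ** matrix_inv M" using inv_lr[OF assms(1)] by simp
  finally show ?thesis .
qed

lemma det_mpow: fixes M :: cmat2 shows "det (mpow M k) = det M ^ k"
  by (induction k) (simp_all add: det_mul)

lemma det_inv: fixes M :: cmat2 assumes "det M \<noteq> 0" shows "det (matrix_inv M) \<noteq> 0"
  using inv_lr(1)[OF assms] det_mul[of M "matrix_inv M"] by auto

lemma mzpow_comm: fixes B :: cmat2 assumes "det B \<noteq> 0"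
  shows "mzpow B k ** B = B ** mzpow B k"
  unfolding mzpow_def using mpow_comm inv_comm[OF assms] by auto

lemma mzpow_det: fixes B :: cmat2 assumes "det B \<noteq> 0"
  shows "det (mzpow B k) \<noteq> 0"
  unfolding mzpow_def using det_mpow det_inv[OF assms] assms by auto

lemma mat_comm: fixes M :: cmat2 shows "mat d ** M = M ** mat d"
  by (simp add: vec_eq_iff matrix_matrix_mult_def mat_def sum_2 forall_2)

lemma mat_mult: "(mat a :: cmat2) ** mat b = mat (a*b)"
  by (simp add: vec_eq_iff matrix_matrix_mult_def mat_def sum_2 forall_2)


lemma cen:
  fixes a11 a12 a21 a22 b11 b12 b21 b22 p q r s :: complex
  assumes ns: "q \<noteq> 0 \<or> r \<noteq> 0 \<or> p \<noteq> s"
  and a: "a12 * r = q * a21" "a11 * q + a12 * s = p * a12 + q * a22" "a21 * p + a22 * r = r * a11 + s * a21"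
  and b: "b12 * r = q * b21" "b11 * q + b12 * s = p * b12 + q * b22" "b21 * p + b22 * r = r * b11 + s * b21"
  shows "a12 * b21 = b12 * a21 \<and> a11*b12 + a12*b22 = b11*a12 + b12*a22 \<and> a21*b11+a22*b21 = b21*a11+b22*a21"
proof -
  consider "q \<noteq> 0" | "q = 0" "r \<noteq> 0" | "q = 0" "r = 0" "p \<noteq> s" using ns by blast
  then show ?thesis
  proof cases
    case 1
    have "q * (a12 * b21 - b12 * a21) = 0" "q*(a11*b12 + a12*b22 - (b11*a12 + b12*a22)) = 0"
      "q * (q*(a21*b11+a22*b21 - (b21*a11+b22*a21))) = 0"
      using a b by algebra+
    then show ?thesis using 1 by simp
  next
    case 2
    have "r * (a12 * b21 - b12 * a21) = 0" "r * (r*(a11*b12 + a12*b22 - (b11*a12 + b12*a22))) = 0"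
      "r*(a21*b11+a22*b21 - (b21*a11+b22*a21)) = 0"
      using a b by algebra+
    then show ?thesis using 2 by simp
  next
    case 3
    have "(p-s)*a12 = 0" "(p-s)*b12 = 0" "(p-s)*a21 = 0" "(p-s)*b21 = 0" using a b 3 by algebra+
    then have "a12 = 0" "b12 = 0" "a21 = 0" "b21 = 0" using 3 by auto
    then show ?thesis by simp
  qed
qed

lemma centralizer:
  fixes A B M :: cmat2
  assumes "\<not>(\<exists>c. M = mat c)" "A ** M = M ** A" "B ** M = M ** B"
  shows "A ** B = B ** A"
proof -
  have ns: "M$1$2 \<noteq> 0 \<or> M$2$1 \<noteq> 0 \<or> M$1$1 \<noteq> M$2$2"
  proof (rule ccontr)
    assume "\<not> ?thesis"
    then have "M = mat (M$1$1)" by (auto simp: vec_eq_iff mat_def forall_2)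
    then show False using assms(1) by blast
  qed
  have a: "A$1$2 * M$2$1 = M$1$2 * A$2$1"
          "A$1$1 * M$1$2 + A$1$2 * M$2$2 = M$1$1 * A$1$2 + M$1$2 * A$2$2"
          "A$2$1 * M$1$1 + A$2$2 * M$2$1 = M$2$1 * A$1$1 + M$2$2 * A$2$1"
    using assms(2) by (simp_all add: vec_eq_iff matrix_matrix_mult_def sum_2 forall_2; metis mult.commute)+
  have b: "B$1$2 * M$2$1 = M$1$2 * B$2$1"
          "B$1$1 * M$1$2 + B$1$2 * M$2$2 = M$1$1 * B$1$2 + M$1$2 * B$2$2"
          "B$2$1 * M$1$1 + B$2$2 * M$2$1 = M$2$1 * B$1$1 + M$2$2 * B$2$1"
    using assms(3) by (simp_all add: vec_eq_iff matrix_matrix_mult_def sum_2 forall_2; metis mult.commute)+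
  have "A$1$2 * B$2$1 = B$1$2 * A$2$1 \<and> A$1$1*B$1$2 + A$1$2*B$2$2 = B$1$1*A$1$2 + B$1$2*A$2$2 \<and> A$2$1*B$1$1+A$2$2*B$2$1 = B$2$1*A$1$1+B$2$2*A$2$1"
    by (rule cen[OF ns a b])
  then show ?thesis
    by (simp add: vec_eq_iff matrix_matrix_mult_def sum_2 forall_2 algebra_simps)
qed

lemma sq_one:
  fixes Y :: cmat2 assumes "Y ** Y = mat 1" "det Y = 1"
  shows "\<exists>d. Y = mat d"
proof -
  have e: "Y$1$1*Y$1$1 + Y$1$2*Y$2$1 = 1" "Y$1$1*Y$1$2 + Y$1$2*Y$2$2 = 0"
    "Y$2$1*Y$1$1 + Y$2$2*Y$2$1 = 0" "Y$2$1*Y$1$2 + Y$2$2*Y$2$2 = 1"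
    using assms(1) by (simp_all add: vec_eq_iff matrix_matrix_mult_def sum_2 forall_2 mat_def)
  have d: "Y$1$1*Y$2$2 - Y$1$2*Y$2$1 = 1" using assms(2) by (simp add: det_2)
  have t: "Y$1$1 + Y$2$2 \<noteq> 0"
  proof
    assume "Y$1$1 + Y$2$2 = 0"
    then have "(2::complex) = 0" using e(1) d by algebra
    then show False by simp
  qed
  have "Y$1$2 * (Y$1$1 + Y$2$2) = 0" "Y$2$1 * (Y$1$1 + Y$2$2) = 0" using e(2,3) by algebra+
  then have o: "Y$1$2 = 0" "Y$2$1 = 0" using t by simp_all
  have "(Y$1$1 - Y$2$2) * (Y$1$1 + Y$2$2) = 0" using e(1,4) o by algebra
  then have "Y$1$1 = Y$2$2" using t by simp
  then have "Y = mat (Y$1$1)" using o by (auto simp: vec_eq_iff mat_def forall_2)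
  then show ?thesis by blast
qed


lemma gen_abelian:
  fixes S T :: "cmat2 set"
  assumes T: "\<forall>s\<in>T. \<forall>t\<in>T. s ** t = t ** s" and ST: "S \<subseteq> T" "matrix_inv ` S \<subseteq> T"
  shows "abelian_set (gen_grp S)"
proof -
  have s1: "\<forall>t\<in>T. g ** t = t ** g" if "g \<in> gen_grp S" for g
    using that
  proof (induction rule: gen_grp.induct)
    case one then show ?case by simp
  next
    case (gen g) then show ?case using T ST by blast
  next
    case (inv g) then show ?case using T ST by blast
  next
    case (mult g h)
    show ?case
    proof
      fix t assume "t \<in> T"
      have "g ** h ** t = g ** (h ** t)" by (simp add: matrix_mul_assoc)
      also have "\<dots> = g ** t ** h" using mult.IH(2) \<open>t \<in> T\<close> by (simp add: matrix_mul_assoc)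
      also have "\<dots> = t ** g ** h" using mult.IH(1) \<open>t \<in> T\<close> by simp
      finally show "g ** h ** t = t ** (g ** h)" by (simp add: matrix_mul_assoc)
    qed
  qed
  have s2: "\<forall>g\<in>gen_grp S. g ** h = h ** g" if "h \<in> gen_grp S" for h
    using that
  proof (induction rule: gen_grp.induct)
    case one then show ?case by simp
  next
    case (gen h) then show ?case using s1 ST by blast
  next
    case (inv h) then show ?case using s1 ST by blast
  next
    case (mult h1 h2)
    show ?case
    proof
      fix g assume g: "g \<in> gen_grp S"
      have "g ** (h1 ** h2) = g ** h1 ** h2" by (simp add: matrix_mul_assoc)
      also have "\<dots> = h1 ** (g ** h2)" using mult.IH(1) g by (simp add: matrix_mul_assoc)
      also have "\<dots> = h1 ** h2 ** g" using mult.IH(2) g by (simp add: matrix_mul_assoc)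
      finally show "g ** (h1 ** h2) = h1 ** h2 ** g" .
    qed
  qed
  show ?thesis unfolding abelian_set_def using s2 by blast
qed

lemma mzpow2: fixes A :: cmat2 shows "mzpow A 2 = A ** A"
  by (simp add: mzpow_def eval_nat_numeral)

theorem proposition3p4:
  fixes n :: int and A B X Y :: cmat2
  assumes "n \<noteq> 0" and "n \<noteq> -1"
    and "rep_M n A B X Y"
    and "irreducible_set (gen_grp {A, B, X, Y})"
  shows "abelian_set (gen_grp {A, B})"
proof -
  note r = assms(3)[unfolded rep_M_def SL2_def, simplified]
  have dA: "det A \<noteq> 0" and dB: "det B \<noteq> 0" and dX: "det X \<noteq> 0" and dY: "det Y \<noteq> 0"
    using r by auto
  have r1: "A ** A = mzpow B (2*n+1)" using r mzpow2 by metis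
  have r2: "matrix_inv X ** Y ** X = matrix_inv Y" using r by blast
  have r3: "mzpow B (-n) ** A = matrix_inv Y" using r by blast
  have r4: "A ** A = matrix_inv Y ** (X ** X)" using r mzpow2 by metis
  define P where "P = A ** A"
  have PA: "P ** A = A ** P" unfolding P_def by (simp add: matrix_mul_assoc)
  have PB: "P ** B = B ** P" unfolding P_def r1 using mzpow_comm[OF dB] by simp
  have AB: "A ** B = B ** A"
  proof (cases "\<exists>c. P = mat c")
    case False
    show ?thesis by (rule centralizer[OF False PA[symmetric] PB[symmetric]])
  next
    case True
    then obtain c where c: "P = mat c" by blast
    have "det P = 1" unfolding P_def using r by (simp add: det_mul)
    then have c0: "c \<noteq> 0" using c by (auto simp: det_2 mat_def)
    have XX: "X ** X = Y ** mat c"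
    proof -
      have "Y ** mat c = Y ** (matrix_inv Y ** (X ** X))" using c r4 P_def by simp
      also have "\<dots> = X ** X" using inv_lr[OF dY] by (simp add: matrix_mul_assoc)
      finally show ?thesis by simp
    qed
    have "X ** Y ** mat c = Y ** X ** mat c"
    proof -
      have "X ** Y ** mat c = X ** (X ** X)" using XX by (simp add: matrix_mul_assoc)
      also have "\<dots> = (X ** X) ** X" by (simp add: matrix_mul_assoc)
      also have "\<dots> = Y ** (mat c ** X)" using XX by (simp add: matrix_mul_assoc)
      also have "\<dots> = Y ** X ** mat c" using mat_comm by (simp add: matrix_mul_assoc)
      finally show ?thesis .
    qed
    then have "X ** Y ** mat c ** mat (1/c) = Y ** X ** mat c ** mat (1/c)" by simp
    then have XY: "X ** Y = Y ** X" using c0 by (simp add: matrix_mul_assoc[symmetric] mat_mult)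
    have "matrix_inv Y = Y"
    proof -
      have "matrix_inv Y = matrix_inv X ** (X ** Y)" using r2 XY by (simp add: matrix_mul_assoc)
      also have "\<dots> = Y" using inv_lr[OF dX] by (simp add: matrix_mul_assoc)
      finally show ?thesis .
    qed
    then have "Y ** Y = mat 1" using inv_lr[OF dY] by simp
    then obtain d where d: "Y = mat d" using sq_one r by blast
    have YiB: "matrix_inv Y ** B = B ** matrix_inv Y" using inv_comm[OF dY] d mat_comm by metis
    define K where "K = mzpow B (-n)"
    have dK: "det K \<noteq> 0" unfolding K_def by (rule mzpow_det[OF dB])
    have KB: "matrix_inv K ** B = B ** matrix_inv K"
      using inv_comm[OF dK] mzpow_comm[OF dB] unfolding K_def by blast
    have A: "A = matrix_inv K ** matrix_inv Y"
    proof -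
      have "A = matrix_inv K ** (K ** A)" using inv_lr[OF dK] by (simp add: matrix_mul_assoc)
      then show ?thesis using r3 K_def by simp
    qed
    have "A ** B = matrix_inv K ** (matrix_inv Y ** B)" using A by (simp add: matrix_mul_assoc)
    also have "\<dots> = (matrix_inv K ** B) ** matrix_inv Y" using YiB by (simp add: matrix_mul_assoc)
    also have "\<dots> = B ** A" using KB A by (simp add: matrix_mul_assoc)
    finally show ?thesis .
  qed
  have c1: "matrix_inv A ** B = B ** matrix_inv A" using inv_comm[OF dA AB] .
  have c2: "matrix_inv B ** A = A ** matrix_inv B" using inv_comm[OF dB AB[symmetric]] .
  have c3: "matrix_inv A ** matrix_inv B = matrix_inv B ** matrix_inv A"
    using inv_comm[OF dA c2[symmetric]] .
  have c4: "matrix_inv A ** A = A ** matrix_inv A" using inv_lr[OF dA] by simp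
  have c5: "matrix_inv B ** B = B ** matrix_inv B" using inv_lr[OF dB] by simp
  show ?thesis
    apply (rule gen_abelian[where T = "{A, B, matrix_inv A, matrix_inv B}"])
    using AB c1 c2 c3 c4 c5 by auto
qed

end
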